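(* Let $p=4m+1$ be a prime, put $n=2m$, and let $A_0=(a_0,\ldots,a_n)\in\mathbb{F}_p^{n+1}$ satisfy $a_i^2\neq a_j^2$ for all $0\le i<j\le n$. For $u,v\in\mathbb{F}_p$ define \[ D_{A_0}(u,v)=\det\left[\chi(a_i+a_j)+\chi(a_i-a_j)+u\,\chi(a_i^2+va_j^2)\right]_{0\le i,j\le n}. \] Then \[ D_{A_0}(u,v)\equiv(-1)^{m(2m+1)}u^{2m+1}v^{m(2m+1)}\left(\prod_{r=0}^{2m}\binom{2m}{r}\right)\prod_{0\le i<j\le 2m}(a_j^2-a_i^2)^2 \pmod p. \]
   Context: $\chi(t)=\left(\frac{t}{p}\right)$ is the Legendre symbol on $\mathbb{F}_p$, with $\chi(0)=0$; the determinant is an integer and the congruence is taken modulo $p$ (equivalently, as an identity in $\mathbb{F}_p$). *)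

theory Defs
  imports "HOL-Number_Theory.Number_Theory" "Jordan_Normal_Form.Determinant"
begin

end

theory Submission
  imports Defs
begin


lemma det_row_scale:
  "det (mat n n (\<lambda>(i,j). c i * f i j)) = (\<Prod>i<n. c i) * det (mat n n (\<lambda>(i,j). f i j))"
proof -
  have "det (mat n n (\<lambda>(i,j). c i * f i j)) =
    (\<Sum>p\<in>{p. p permutes {0..<n}}. signof p * (\<Prod>i=0..<n. c i * f i (p i)))"
    unfolding det_def by (auto intro!: sum.cong prod.cong simp: permutes_in_image)
  also have "\<dots> = (\<Prod>i<n. c i) * (\<Sum>p\<in>{p. p permutes {0..<n}}. signof p * (\<Prod>i=0..<n. f i (p i)))"
    by (simp add: sum_distrib_left prod.distrib atLeast0LessThan algebra_simps)
  also have "(\<Sum>p\<in>{p. p permutes {0..<n}}. signof p * (\<Prod>i=0..<n. f i (p i))) = det (mat n n (\<lambda>(i,j). f i j))"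
    unfolding det_def by (auto intro!: sum.cong prod.cong simp: permutes_in_image)
  finally show ?thesis .
qed

lemma vdm1: "det (mat n n (\<lambda>(i,j). (x i :: 'a::comm_ring_1) ^ j)) = (\<Prod>j<n. \<Prod>i<j. x j - x i)"
proof (induction n arbitrary: x)
  case 0
  show ?case by (simp add: det_def)
next
  case (Suc n)
  define A where "A = mat (Suc n) (Suc n) (\<lambda>(i,j). x i ^ j)"
  define E where "E = mat (Suc n) (Suc n) (\<lambda>(k,j). if k = j then 1 else if j = Suc k then - x 0 else 0)"
  define B where "B = mat (Suc n) (Suc n) (\<lambda>(i,j). if j = 0 then 1 else (x i - x 0) * x i ^ (j - 1))"
  have AE: "A * E = B"
  proof (rule eq_matI)
    fix i j assume "i < dim_row B" "j < dim_col B"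
    then have i: "i < Suc n" and j: "j < Suc n" by (simp_all add: B_def)
    have "(A*E) $$ (i,j) = (\<Sum>k<Suc n. x i ^ k * (if k = j then 1 else if j = Suc k then - x 0 else 0))"
      using i j by (simp add: A_def E_def scalar_prod_def lessThan_atLeast0)
    also have "\<dots> = (\<Sum>k<Suc n. (if k = j then x i ^ k else 0)) + (\<Sum>k<Suc n. (if Suc k = j then - x 0 * x i ^ k else 0))"
      by (subst sum.distrib[symmetric]) (rule sum.cong, auto)
    also have "\<dots> = B $$ (i,j)"
      using i j apply (cases j) apply (auto simp: B_def algebra_simps)
      by (metis Suc_lessI power_Suc)
    finally show "(A*E) $$ (i,j) = B $$ (i,j)" .
  qed (auto simp: A_def E_def B_def)
  have Ec: "E \<in> carrier_mat (Suc n) (Suc n)" and Ac: "A \<in> carrier_mat (Suc n) (Suc n)"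
    and Bc: "B \<in> carrier_mat (Suc n) (Suc n)" by (auto simp: A_def B_def E_def)
  have "det E = prod_list (diag_mat E)"
    by (rule det_upper_triangular[OF _ Ec]) (auto simp: upper_triangular_def E_def)
  also have "\<dots> = 1" unfolding diag_mat_def
    by (subst prod.distinct_set_conv_list[symmetric]) (auto simp: E_def intro!: prod.neutral)
  finally have dE: "det E = 1" .
  have "det A = det B" using det_mult[OF Ac Ec] dE AE by simp
  also have "det B = (\<Sum>j<Suc n. B $$ (0,j) * cofactor B 0 j)"
    by (rule laplace_expansion_row[OF Bc]) simp
  also have "\<dots> = cofactor B 0 0"
    by (subst sum.lessThan_Suc_shift) (simp add: B_def)
  also have "\<dots> = det (mat n n (\<lambda>(i,j). (x (Suc i) - x 0) * x (Suc i) ^ j))"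
    unfolding cofactor_def
    by (simp, rule arg_cong[where f=det], rule eq_matI) (auto simp: mat_delete_def B_def)
  also have "\<dots> = (\<Prod>i<n. x (Suc i) - x 0) * (\<Prod>j<n. \<Prod>i<j. x (Suc j) - x (Suc i))"
    using det_row_scale[of n "\<lambda>i. x (Suc i) - x 0" "\<lambda>i j. x (Suc i) ^ j"] Suc.IH[of "\<lambda>i. x (Suc i)"]
    by simp
  also have "\<dots> = (\<Prod>j<Suc n. \<Prod>i<j. x j - x i)"
    by (subst prod.lessThan_Suc_shift, subst prod.lessThan_Suc_shift) (simp add: prod.distrib)
  finally show ?case by (simp add: A_def)
qed

lemma vdm2: "det (mat n n (\<lambda>(i,j). (x i :: 'a::comm_ring_1) ^ (n - 1 - j))) = (\<Prod>j<n. \<Prod>i<j. x i - x j)"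
proof (induction n arbitrary: x)
  case 0
  show ?case by (simp add: det_def)
next
  case (Suc n)
  define A where "A = mat (Suc n) (Suc n) (\<lambda>(i,j). x i ^ (n - j))"
  define E where "E = mat (Suc n) (Suc n) (\<lambda>(k,j). if k = j then 1 else if k = Suc j then - x 0 else 0)"
  define B where "B = mat (Suc n) (Suc n) (\<lambda>(i,j). if j = n then 1 else (x i - x 0) * x i ^ (n - 1 - j))"
  have AE: "A * E = B"
  proof (rule eq_matI)
    fix i j assume "i < dim_row B" "j < dim_col B"
    then have i: "i < Suc n" and j: "j < Suc n" by (simp_all add: B_def)
    have "(A*E) $$ (i,j) = (\<Sum>k<Suc n. x i ^ (n - k) * (if k = j then 1 else if k = Suc j then - x 0 else 0))"
      using i j by (simp add: A_def E_def scalar_prod_def lessThan_atLeast0)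
    also have "\<dots> = (\<Sum>k<Suc n. (if k = j then x i ^ (n - k) else 0)) + (\<Sum>k<Suc n. (if k = Suc j then - x 0 * x i ^ (n - k) else 0))"
      by (subst sum.distrib[symmetric]) (rule sum.cong, auto)
    also have "\<dots> = B $$ (i,j)"
    proof (cases "j = n")
      case True
      then show ?thesis using i j by (simp add: B_def)
    next
      case False
      then have jn: "j < n" using j by simp
      then have "n - j = Suc (n - 1 - j)" by simp
      then show ?thesis using i j jn by (simp add: B_def algebra_simps)
    qed
    finally show "(A*E) $$ (i,j) = B $$ (i,j)" .
  qed (auto simp: A_def E_def B_def)
  have Ec: "E \<in> carrier_mat (Suc n) (Suc n)" and Ac: "A \<in> carrier_mat (Suc n) (Suc n)"
    and Bc: "B \<in> carrier_mat (Suc n) (Suc n)" by (auto simp: A_def B_def E_def)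
  have "det E = prod_list (diag_mat E)"
    by (rule det_lower_triangular[OF _ Ec]) (auto simp: E_def)
  also have "\<dots> = 1" unfolding diag_mat_def
    by (subst prod.distinct_set_conv_list[symmetric]) (auto simp: E_def intro!: prod.neutral)
  finally have dE: "det E = 1" .
  have "det A = det B" using det_mult[OF Ac Ec] dE AE by simp
  also have "det B = (\<Sum>j<Suc n. B $$ (0,j) * cofactor B 0 j)"
    by (rule laplace_expansion_row[OF Bc]) simp
  also have "\<dots> = cofactor B 0 n"
    by (subst sum.lessThan_Suc) (simp add: B_def)
  also have "\<dots> = (-1)^n * det (mat n n (\<lambda>(i,j). (x (Suc i) - x 0) * x (Suc i) ^ (n - 1 - j)))"
    unfolding cofactor_def
    apply (simp only: add_0)
    apply (rule arg_cong[where f="\<lambda>M. (-1)^n * det M"])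
    by (rule eq_matI) (auto simp: mat_delete_def B_def)
  also have "\<dots> = (-1)^n * (\<Prod>i<n. x (Suc i) - x 0) * (\<Prod>j<n. \<Prod>i<j. x (Suc i) - x (Suc j))"
    using det_row_scale[of n "\<lambda>i. x (Suc i) - x 0" "\<lambda>i j. x (Suc i) ^ (n - 1 - j)"] Suc.IH[of "\<lambda>i. x (Suc i)"]
    by simp
  also have "(-1)^n * (\<Prod>i<n. x (Suc i) - x 0) = (\<Prod>i<n. x 0 - x (Suc i))"
  proof -
    have "(\<Prod>i<n. x 0 - x (Suc i)) = (\<Prod>i<n. (-1) * (x (Suc i) - x 0))" by (rule prod.cong) auto
    then show ?thesis by (simp only: prod.distrib prod_constant card_lessThan)
  qed
  also have "(\<Prod>i<n. x 0 - x (Suc i)) * (\<Prod>j<n. \<Prod>i<j. x (Suc i) - x (Suc j)) = (\<Prod>j<Suc n. \<Prod>i<j. x i - x j)"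
    by (subst prod.lessThan_Suc_shift, subst prod.lessThan_Suc_shift) (simp add: prod.distrib)
  finally show ?case by (simp add: A_def)
qed



lemma sum_shift_if: "(\<Sum>s<k+(n::nat). if k \<le> s then h (s-k) else (0::'a::comm_monoid_add)) = (\<Sum>r<n. h r)"
  by (induction n) auto

lemma sum_pairs: "(\<Sum>k<2*n. f k) = (\<Sum>r<n. f (2*r) + f (2*r+1::nat)) " for f :: "nat \<Rightarrow> 'a::comm_monoid_add"
  by (induction n) (auto simp: add.assoc)

lemma sum_rev_nat: "(\<Sum>r<Suc n. n - r) = (\<Sum>r<Suc n. r)"
proof (induction n)
  case (Suc n)
  have "(\<Sum>r<Suc (Suc n). Suc n - r) = Suc n + (\<Sum>r<Suc n. n - r)"
    by (subst sum.lessThan_Suc_shift) simp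
  also have "\<dots> = (\<Sum>r<Suc (Suc n). r)" using Suc.IH by simp
  finally show ?case .
qed simp

lemma sum_gauss_odd: "(\<Sum>r<Suc (2*m). r) = m * (2*m+1)"
proof -
  have "(\<Sum>r<Suc (2*m). r) = \<Sum>{0..2*m}" by (simp add: atLeast0AtMost lessThan_Suc_atMost)
  also have "\<dots> = 2*m * Suc (2*m) div 2" by (rule gauss_sum_nat)
  finally show ?thesis by simp
qed

lemma even_binom:
  fixes \<alpha> \<beta> :: "'a::comm_ring_1"
  shows "(\<alpha>+\<beta>)^(2*m) + (\<alpha>-\<beta>)^(2*m) = (\<Sum>r<Suc m. 2 * of_nat (2*m choose (2*r)) * (\<alpha>^2)^r * (\<beta>^2)^(m-r))"
proof -
  define f where "f k = of_nat (2*m choose k) * \<alpha>^k * \<beta>^(2*m-k) * (1 + (-1)^k)" for k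
  have "(\<alpha>-\<beta>)^(2*m) = (-\<alpha>+\<beta>)^(2*m)"
    by (metis add.commute diff_conv_add_uminus minus_diff_eq power_minus_even even_mult_iff even_numeral)
  also have "\<dots> = (\<Sum>k\<le>2*m. of_nat (2*m choose k) * (-\<alpha>)^k * \<beta>^(2*m-k))"
    by (rule binomial_ring)
  finally have 1: "(\<alpha>-\<beta>)^(2*m) = (\<Sum>k\<le>2*m. of_nat (2*m choose k) * (-\<alpha>)^k * \<beta>^(2*m-k))" .
  have 2: "(\<alpha>+\<beta>)^(2*m) = (\<Sum>k\<le>2*m. of_nat (2*m choose k) * \<alpha>^k * \<beta>^(2*m-k))"
    by (rule binomial_ring)
  have "(\<alpha>+\<beta>)^(2*m) + (\<alpha>-\<beta>)^(2*m) = (\<Sum>k\<le>2*m. f k)"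
    unfolding 1 2 f_def sum.distrib[symmetric]
    by (rule sum.cong) (auto simp: power_minus' algebra_simps)
  also have "\<dots> = (\<Sum>k<2*Suc m. f k)"
    by (simp add: lessThan_Suc_atMost[symmetric] f_def)
  also have "\<dots> = (\<Sum>r<Suc m. f (2*r) + f (2*r+1))" by (rule sum_pairs)
  also have "\<dots> = (\<Sum>r<Suc m. 2 * of_nat (2*m choose (2*r)) * (\<alpha>^2)^r * (\<beta>^2)^(m-r))"
  proof (rule sum.cong)
    fix r assume "r \<in> {..<Suc m}"
    then have "2*m - 2*r = 2*(m-r)" by simp
    then show "f (2*r) + f (2*r+1) = 2 * of_nat (2*m choose (2*r)) * (\<alpha>^2)^r * (\<beta>^2)^(m-r)"
      by (simp add: f_def power_mult)
  qed simp
  finally show ?thesis .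
qed



lemma det_cong_int:
  assumes "\<And>i j. i < n \<Longrightarrow> j < n \<Longrightarrow> [f i j = g i j] (mod (q::int))"
  shows "[det (mat n n (\<lambda>(i,j). f i j)) = det (mat n n (\<lambda>(i,j). g i j))] (mod q)"
proof -
  have "det (mat n n (\<lambda>(i,j). f i j)) = (\<Sum>p\<in>{p. p permutes {0..<n}}. signof p * (\<Prod>i=0..<n. f i (p i)))"
    unfolding det_def by (auto intro!: sum.cong prod.cong simp: permutes_in_image)
  moreover have "det (mat n n (\<lambda>(i,j). g i j)) = (\<Sum>p\<in>{p. p permutes {0..<n}}. signof p * (\<Prod>i=0..<n. g i (p i)))"
    unfolding det_def by (auto intro!: sum.cong prod.cong simp: permutes_in_image)
  moreover have "[(\<Sum>p\<in>{p. p permutes {0..<n}}. signof p * (\<Prod>i=0..<n. f i (p i)))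
      = (\<Sum>p\<in>{p. p permutes {0..<n}}. signof p * (\<Prod>i=0..<n. g i (p i)))] (mod q)"
    by (intro cong_sum cong_mult cong_refl cong_prod) (auto intro: assms simp: permutes_in_image)
  ultimately show ?thesis by simp
qed

lemma main_exact:
  fixes m :: nat and a :: "nat \<Rightarrow> int" and u v :: int
  assumes m: "m \<ge> 1"
  shows "det (mat (2*m+1) (2*m+1) (\<lambda>(i,j). (a i + a j)^(2*m) + (a i - a j)^(2*m) + u * (a i^2 + v * a j^2)^(2*m)))
     = (-1) ^ (m * (2 * m + 1)) * u ^ (2 * m + 1) * v ^ (m * (2 * m + 1))
            * (\<Prod>r = 0..2 * m. int (2 * m choose r))
            * (\<Prod>(i, j) \<in> {(i, j). i < j \<and> j \<le> 2 * m}. (a j ^ 2 - a i ^ 2) ^ 2)"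
proof -
  define N where "N = 2*m+1"
  define x where "x i = a i ^ 2" for i
  define X where "X = mat N N (\<lambda>(i,r). x i ^ r)"
  define T where "T = mat N N (\<lambda>(r,s). (if s = r then u * int (2*m choose r) * v^(2*m-r) else 0)
     + (if s = m + r then 2 * int (2*m choose (2*r)) else 0))"
  define Y where "Y = mat N N (\<lambda>(i,j). x i ^ (N - 1 - j))"
  have Xc: "X \<in> carrier_mat N N" and Tc: "T \<in> carrier_mat N N" and Yc: "Y \<in> carrier_mat N N"
    by (auto simp: X_def T_def Y_def)
  have XT: "(X*T)$$(i,s) = u * int (2*m choose s) * v^(2*m-s) * x i^s
     + (if m \<le> s then 2 * int (2*m choose (2*(s-m))) * x i^(s-m) else 0)" if i: "i < N" and s: "s < N" for i s
  proof -
    have "(X*T)$$(i,s) = (\<Sum>r<N. x i ^ r * ((if s = r then u * int (2*m choose r) * v^(2*m-r) else 0)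
     + (if s = m + r then 2 * int (2*m choose (2*r)) else 0)))"
      using i s by (simp add: X_def T_def scalar_prod_def lessThan_atLeast0)
    also have "\<dots> = (\<Sum>r<N. if s = r then x i ^ r * (u * int (2*m choose r) * v^(2*m-r)) else 0)
      + (\<Sum>r<N. if r = s - m then (if m \<le> s then x i ^ r * (2 * int (2*m choose (2*r))) else 0) else 0)"
      by (subst sum.distrib[symmetric]) (rule sum.cong, auto simp: algebra_simps)
    also have "\<dots> = u * int (2*m choose s) * v^(2*m-s) * x i^s
     + (if m \<le> s then 2 * int (2*m choose (2*(s-m))) * x i^(s-m) else 0)"
      using s by (auto simp: algebra_simps)
    finally show ?thesis .
  qed
  have E: "mat N N (\<lambda>(i,j). (a i + a j)^(2*m) + (a i - a j)^(2*m) + u * (a i^2 + v * a j^2)^(2*m))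
     = X * T * Y\<^sup>T"
  proof (rule eq_matI)
    fix i j assume "i < dim_row (X * T * Y\<^sup>T)" "j < dim_col (X * T * Y\<^sup>T)"
    then have i: "i < N" and j: "j < N" by (auto simp: X_def Y_def)
    have "(X * T * Y\<^sup>T) $$ (i,j) = (\<Sum>s<N. (X*T)$$(i,s) * x j ^ (N - 1 - s))"
      using i j Xc Tc Yc by (simp add: Y_def scalar_prod_def lessThan_atLeast0)
    also have "\<dots> = (\<Sum>s<N. (u * int (2*m choose s) * v^(2*m-s) * x i^s
     + (if m \<le> s then 2 * int (2*m choose (2*(s-m))) * x i^(s-m) else 0)) * x j ^ (2*m - s))"
    proof (rule sum.cong)
      fix s assume "s \<in> {..<N}"
      then have "s < N" by simp
      then show "(X*T)$$(i,s) * x j ^ (N - 1 - s) = (u * int (2*m choose s) * v^(2*m-s) * x i^s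
     + (if m \<le> s then 2 * int (2*m choose (2*(s-m))) * x i^(s-m) else 0)) * x j ^ (2*m - s)"
        using XT[OF i] by (simp add: N_def)
    qed simp
    also have "\<dots> = u * (\<Sum>s\<le>2*m. int (2*m choose s) * x i^s * (v * x j)^(2*m-s))
       + (\<Sum>s<m + Suc m. if m \<le> s then 2 * int (2*m choose (2*(s-m))) * x i^(s-m) * x j ^ (m - (s-m)) else 0)"
    proof -
      have s1: "{..2*m} = {..<2*m+1}" and s2: "m + Suc m = 2*m+1" by auto
      show ?thesis unfolding sum_distrib_left sum.distrib[symmetric] N_def s1 s2
      proof (rule sum.cong)
        fix s assume "s \<in> {..<2*m+1}"
        show "(u * int (2*m choose s) * v^(2*m-s) * x i^s
          + (if m \<le> s then 2 * int (2*m choose (2*(s-m))) * x i^(s-m) else 0)) * x j ^ (2*m - s)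
          = u * (int (2*m choose s) * x i^s * (v * x j)^(2*m-s))
          + (if m \<le> s then 2 * int (2*m choose (2*(s-m))) * x i^(s-m) * x j ^ (m - (s-m)) else 0)"
        proof (cases "m \<le> s")
          case True
          then have "2*m - s = m - (s - m)" by simp
          then show ?thesis using True by (simp add: power_mult_distrib algebra_simps)
        qed (simp add: power_mult_distrib algebra_simps)
      qed simp
    qed
    also have "\<dots> = u * (x i + v * x j)^(2*m) + (\<Sum>r<Suc m. 2 * int (2*m choose (2*r)) * x i^r * x j ^ (m - r))"
      using sum_shift_if[where k=m and n="Suc m" and h="\<lambda>r. 2 * int (2*m choose (2*r)) * x i^r * x j^(m-r)"]
      by (simp only: binomial_ring)
    also have "\<dots> = (a i + a j)^(2*m) + (a i - a j)^(2*m) + u * (a i^2 + v * a j^2)^(2*m)"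
      by (simp add: even_binom x_def)
    finally show "mat N N (\<lambda>(i,j). (a i + a j)^(2*m) + (a i - a j)^(2*m) + u * (a i^2 + v * a j^2)^(2*m)) $$ (i,j)
      = (X * T * Y\<^sup>T) $$ (i,j)" using i j by simp
  qed (auto simp: X_def Y_def)
  have dT0: "det T = (\<Prod>r<N. u * int (2*m choose r) * v^(2*m-r))"
  proof -
    have "det T = prod_list (diag_mat T)"
      by (rule det_upper_triangular[OF _ Tc]) (auto simp: upper_triangular_def T_def)
    also have "\<dots> = (\<Prod>r\<in>set [0..<N]. T $$ (r,r))" unfolding diag_mat_def
      by (subst prod.distinct_set_conv_list) (auto simp: T_def)
    also have "\<dots> = (\<Prod>r<N. u * int (2*m choose r) * v^(2*m-r))"
      using m by (auto simp: T_def lessThan_atLeast0 intro!: prod.cong)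
    finally show ?thesis .
  qed
  have dX: "det X = (\<Prod>j<N. \<Prod>i<j. x j - x i)" unfolding X_def by (rule vdm1)
  have dY: "det Y = (\<Prod>j<N. \<Prod>i<j. x i - x j)" unfolding Y_def by (rule vdm2)
  have YTc: "Y\<^sup>T \<in> carrier_mat N N" using Yc by simp
  have dP: "det (X*T*Y\<^sup>T) = det X * det T * det Y"
    using det_mult[OF mult_carrier_mat[OF Xc Tc] YTc] det_mult[OF Xc Tc] det_transpose[OF Yc]
    by simp
  have gs: "(\<Sum>j<N. j) = m*(2*m+1)" using sum_gauss_odd[of m] by (simp add: N_def)
  have gs2: "(\<Sum>j<N. 2*m - j) = m*(2*m+1)" using sum_gauss_odd[of m] sum_rev_nat[of "2*m"] by (simp add: N_def)
  have XY: "det X * det Y = (-1)^(m*(2*m+1)) * (\<Prod>j<N. \<Prod>i<j. (x j - x i)^2)"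
  proof -
    have "det X * det Y = (\<Prod>j<N. \<Prod>i<j. (-1) * (x j - x i)^2)"
      unfolding dX dY prod.distrib[symmetric] by (intro prod.cong refl) (simp add: power2_eq_square algebra_simps)
    also have "\<dots> = (\<Prod>j<N. (-1)^j * (\<Prod>i<j. (x j - x i)^2))"
      by (intro prod.cong refl) (simp only: prod.distrib prod_constant card_lessThan)
    also have "\<dots> = (\<Prod>j<N. (-1)^j) * (\<Prod>j<N. \<Prod>i<j. (x j - x i)^2)"
      by (simp only: prod.distrib)
    also have "(\<Prod>j<N. (-1::int)^j) = (-1)^(m*(2*m+1))"
      by (simp add: power_sum[symmetric] gs)
    finally show ?thesis .
  qed
  have dT: "det T = u^N * (\<Prod>r<N. int (2*m choose r)) * v^(m*(2*m+1))"
    unfolding dT0 prod.distrib by (simp add: power_sum[symmetric] gs2)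
  have S: "{(i,j). i<j \<and> j \<le> 2*m} = (\<lambda>(j,i). (i,j)) ` (SIGMA j:{..<N}. {..<j})"
    by (force simp: N_def image_iff)
  have P: "(\<Prod>(i, j) \<in> {(i, j). i < j \<and> j \<le> 2 * m}. (a j ^ 2 - a i ^ 2) ^ 2) = (\<Prod>j<N. \<Prod>i<j. (x j - x i)^2)"
    unfolding S by (subst prod.reindex) (auto simp: inj_on_def x_def prod.Sigma intro!: prod.cong split: prod.splits)
  have C: "(\<Prod>r = 0..2 * m. int (2 * m choose r)) = (\<Prod>r<N. int (2*m choose r))"
    by (simp add: N_def atLeast0AtMost lessThan_Suc_atMost)
  have fin: "det X * det T * det Y = (-1)^(m*(2*m+1)) * u^N * v^(m*(2*m+1)) * (\<Prod>r<N. int (2*m choose r)) * (\<Prod>j<N. \<Prod>i<j. (x j - x i)^2)"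
  proof -
    have "det X * det T * det Y = det T * (det X * det Y)" by (simp only: mult_ac)
    also have "\<dots> = (-1)^(m*(2*m+1)) * u^N * v^(m*(2*m+1)) * (\<Prod>r<N. int (2*m choose r)) * (\<Prod>j<N. \<Prod>i<j. (x j - x i)^2)"
      unfolding dT XY by (simp only: mult_ac)
    finally show ?thesis .
  qed
  show ?thesis
    unfolding N_def[symmetric] E dP P C fin ..
qed

theorem theorem1p2:
  fixes p m :: nat and a :: "nat \<Rightarrow> int" and u v :: int
  assumes "prime p" and "p = 4 * m + 1"
    and "\<forall>i j. i < j \<and> j \<le> 2 * m \<longrightarrow> \<not> [a i ^ 2 = a j ^ 2] (mod int p)"
  shows "[det (mat (2 * m + 1) (2 * m + 1)
            (\<lambda>(i, j). Legendre (a i + a j) (int p) + Legendre (a i - a j) (int p)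
                       + u * Legendre (a i ^ 2 + v * a j ^ 2) (int p)))
          = (-1) ^ (m * (2 * m + 1)) * u ^ (2 * m + 1) * v ^ (m * (2 * m + 1))
            * (\<Prod>r = 0..2 * m. int (2 * m choose r))
            * (\<Prod>(i, j) \<in> {(i, j). i < j \<and> j \<le> 2 * m}. (a j ^ 2 - a i ^ 2) ^ 2)] (mod int p)"
  proof -
  have p: "prime p" and pm: "p = 4 * m + 1" using assms by auto
  have m: "m \<ge> 1"
  proof (rule ccontr)
    assume "\<not> m \<ge> 1"
    then have "p = 1" using pm by simp
    then show False using p by simp
  qed
  have p2: "2 < p" using pm m by simp
  have pd: "(p - 1) div 2 = 2 * m" using pm by simp
  have L: "[Legendre t (int p) = t ^ (2*m)] (mod int p)" for t
    using euler_criterion[OF p p2, of t] unfolding pd .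
  have "[det (mat (2 * m + 1) (2 * m + 1)
            (\<lambda>(i, j). Legendre (a i + a j) (int p) + Legendre (a i - a j) (int p)
                       + u * Legendre (a i ^ 2 + v * a j ^ 2) (int p)))
       = det (mat (2*m+1) (2*m+1) (\<lambda>(i,j). (a i + a j)^(2*m) + (a i - a j)^(2*m) + u * (a i^2 + v * a j^2)^(2*m)))] (mod int p)"
    by (rule det_cong_int) (intro cong_add cong_mult cong_refl L)
  then show ?thesis unfolding main_exact[OF m] .
qed

end
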